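(* Let $\theta\in k$, let $\mathcal D$ be a set, let $RB$ be the free Rota--Baxter algebra of weight $\theta$ on $\mathcal D$ with Rota--Baxter map $R$, and let $\iota:GL\to RB$ be the canonical embedding of the Grossman--Larson algebra (the linear map with $\iota(e)=\mathbf 1$, sending the one-vertex tree decorated by $d$ to $d$, sending grafting of trees to $\triangleleft_\theta$ and the Grossman--Larson product of nonempty forests to $\ast_\theta$). Then for all $b_1,\ldots,b_n\in\mathcal D$ (viewed as one-vertex trees), the image of their commutative (forest) product is $$ \iota(b_1\cdots b_n)=\sum_{\sigma\in S_n}R\Big(\cdots R\big(R(b_{\sigma(1)})b_{\sigma(2)}\big)\cdots\Big)b_{\sigma(n)}. $$
   Context: $k$ is a field of characteristic zero. A Rota--Baxter algebra of weight $\theta$ is a unital associative algebra $A$ with linear $R:A\to A$ satisfying $R(x)R(y)=R(R(x)y+xR(y))+\theta R(xy)$. On it, $a\triangleleft_\theta b:=aR(b)-R(b)a+\theta ab$ and $a\ast_\theta b:=R(a)b+aR(b)+\theta ab$. Grossman--Larson algebra $GL$: $\mathcal T$ is the span of $\mathcal D$-decorated rooted trees with grafting $t\curvearrowleft t'$ (sum over vertices $v$ of $t$ of the tree obtained by joining $v$ to the root of $t'$), the free right pre-Lie algebra on $\mathcal D$; $GL=S(\mathcal T)$ is the span of forests (commutative monomials in trees, unit the empty forest $e$). Forests act on trees by $t\curvearrowleft e=t$, $t\curvearrowleft(t_1\cdots t_n)=(t\curvearrowleft(t_1\cdots t_{n-1}))\curvearrowleft t_n-\sum_{i=1}^{n-1}t\curvearrowleft(t_1\cdots(t_i\curvearrowleft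 t_n)\cdots t_{n-1})$, and the Grossman--Larson product is $(t_1\cdots t_n)\ast(t'_1\cdots t'_m)=\sum_f F_0(t_1\curvearrowleft F_1)\cdots(t_n\curvearrowleft F_n)$ over maps $f:\{1..m\}\to\{0..n\}$, $F_i=\prod_{j\in f^{-1}(i)}t'_j$. The map $\iota$ is well defined and injective. *)

theory Defs
  imports Complex_Main "HOL-Library.Multiset" "HOL-Library.Poly_Mapping"
    "HOL-Combinatorics.Permutations"
begin

definition k_algebra :: "('k::field \<Rightarrow> 'a::ring_1 \<Rightarrow> 'a) \<Rightarrow> bool" where
  "k_algebra sc \<longleftrightarrow> vector_space sc \<and>
     (\<forall>c x y. sc c (x * y) = sc c x * y \<and> sc c (x * y) = x * sc c y)"

definition rota_baxter :: "('k::field \<Rightarrow> 'a::ring_1 \<Rightarrow> 'a) \<Rightarrow> 'k \<Rightarrow> ('a \<Rightarrow> 'a) \<Rightarrow> bool" where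
  "rota_baxter sc \<theta> R \<longleftrightarrow> k_algebra sc \<and> Vector_Spaces.linear sc sc R \<and>
     (\<forall>x y. R x * R y = R (R x * y + x * R y) + sc \<theta> (R (x * y)))"

definition rb_tri :: "('k \<Rightarrow> 'a::ring_1 \<Rightarrow> 'a) \<Rightarrow> 'k \<Rightarrow> ('a \<Rightarrow> 'a) \<Rightarrow> 'a \<Rightarrow> 'a \<Rightarrow> 'a" where
  "rb_tri sc \<theta> R a b = a * R b - R b * a + sc \<theta> (a * b)"

definition rb_star :: "('k \<Rightarrow> 'a::ring_1 \<Rightarrow> 'a) \<Rightarrow> 'k \<Rightarrow> ('a \<Rightarrow> 'a) \<Rightarrow> 'a \<Rightarrow> 'a \<Rightarrow> 'a" where
  "rb_star sc \<theta> R a b = R a * b + a * R b + sc \<theta> (a * b)"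

text \<open>Non-planar rooted trees decorated by 'd: a root decoration and a multiset of
  subtrees. Forests are multisets of trees (commutative monomials, e = empty forest).\<close>

datatype 'd rtree = Node 'd "'d rtree multiset"

type_synonym 'd forest = "'d rtree multiset"

definition leaf :: "'d \<Rightarrow> 'd rtree" where
  "leaf d = Node d {#}"

definition scale :: "'k::comm_ring_1 \<Rightarrow> ('b \<Rightarrow>\<^sub>0 'k) \<Rightarrow> ('b \<Rightarrow>\<^sub>0 'k)" where
  "scale c p = Poly_Mapping.map (\<lambda>x. c * x) p"

definition lin :: "('b \<Rightarrow> ('c \<Rightarrow>\<^sub>0 'k::comm_ring_1)) \<Rightarrow> ('b \<Rightarrow>\<^sub>0 'k) \<Rightarrow> ('c \<Rightarrow>\<^sub>0 'k)" where
  "lin f p = (\<Sum>x\<in>Poly_Mapping.keys p. scale (Poly_Mapping.lookup p x) (f x))"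

definition lin_ext :: "('k::comm_ring_1 \<Rightarrow> 'a::ab_group_add \<Rightarrow> 'a) \<Rightarrow> ('b \<Rightarrow> 'a) \<Rightarrow> ('b \<Rightarrow>\<^sub>0 'k) \<Rightarrow> 'a" where
  "lin_ext sc j p = (\<Sum>x\<in>Poly_Mapping.keys p. sc (Poly_Mapping.lookup p x) (j x))"

text \<open>A linear combination of trees viewed in the symmetric algebra S(T) = GL
  (forests = multisets of trees, product = union of multisets, i.e. the
  monoid-algebra product of poly_mapping).\<close>

definition tree_to_gl :: "('d rtree \<Rightarrow>\<^sub>0 'k::comm_ring_1) \<Rightarrow> ('d forest \<Rightarrow>\<^sub>0 'k)" where
  "tree_to_gl = lin (\<lambda>s. Poly_Mapping.single {#s#} 1)"

text \<open>graft t u = sum over vertices v of t of the tree obtained by joining v to the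
  root of u.\<close>

lemma size_child_less:
  assumes "z \<in># ch" shows "size z < Suc (size_multiset size ch)"
proof -
  have "ch = add_mset z (ch - {#z#})" using assms by (simp add: insert_DiffM)
  then have "size_multiset size ch = Suc (size z) + size_multiset size (ch - {#z#})"
    by (metis size_multiset_add_mset)
  then show ?thesis by simp
qed

function graft :: "'d rtree \<Rightarrow> 'd rtree \<Rightarrow> ('d rtree \<Rightarrow>\<^sub>0 'k::comm_ring_1)" where
  "graft (Node d ch) u =
     Poly_Mapping.single (Node d (add_mset u ch)) 1 +
     sum_mset (image_mset (\<lambda>c. \<Sum>s\<in>Poly_Mapping.keys (graft c u).
        scale (Poly_Mapping.lookup (graft c u) s) (Poly_Mapping.single (Node d (add_mset s (ch - {#c#}))) 1)) ch)"
  by pat_completeness auto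
termination
  by (relation "measure (size \<circ> fst)") (auto intro: size_child_less)

text \<open>act_rev t [u_n, ..., u_1] = t \<curvearrowleft> (u_1 ... u_n), following the recursion
  t \<curvearrowleft> (t_1...t_n) = (t \<curvearrowleft> (t_1...t_{n-1})) \<curvearrowleft> t_n
     - sum_i t \<curvearrowleft> (t_1 ... (t_i \<curvearrowleft> t_n) ... t_{n-1})  (multilinear extension).\<close>

fun act_rev :: "'d rtree \<Rightarrow> 'd rtree list \<Rightarrow> ('d rtree \<Rightarrow>\<^sub>0 'k::comm_ring_1)" where
  "act_rev t [] = Poly_Mapping.single t 1"
| "act_rev t (u # rus) =
     lin (\<lambda>s. graft s u) (act_rev t rus) -
     (\<Sum>i<length rus. \<Sum>s\<in>Poly_Mapping.keys (graft (rus ! i) u :: 'd rtree \<Rightarrow>\<^sub>0 'k).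
        scale (Poly_Mapping.lookup (graft (rus ! i) u) s) (act_rev t (rus[i := s])))"

definition forest_list :: "'d forest \<Rightarrow> 'd rtree list" where
  "forest_list F = (SOME xs. mset xs = F)"

definition act :: "'d rtree \<Rightarrow> 'd forest \<Rightarrow> ('d rtree \<Rightarrow>\<^sub>0 'k::comm_ring_1)" where
  "act t F = act_rev t (rev (forest_list F))"

text \<open>(t_1...t_n) * (t'_1...t'_m) = sum over f : {1..m} -> {0..n} of
  F_0 (t_1 \<curvearrowleft> F_1) ... (t_n \<curvearrowleft> F_n),  F_i = prod_{j in f^-1(i)} t'_j.
  Indices of t' are shifted to 0..m-1.\<close>

definition gl_prod :: "'d forest \<Rightarrow> 'd forest \<Rightarrow> ('d forest \<Rightarrow>\<^sub>0 'k::comm_ring_1)" where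
  "gl_prod F G =
    (let ts = forest_list F; us = forest_list G; n = length ts; m = length us;
         part = (\<lambda>f i. image_mset (\<lambda>j. us ! j) (filter_mset (\<lambda>j. f j = i) (mset_set {..<m})))
     in \<Sum>f\<in>Pi\<^sub>E {..<m} (\<lambda>_. {..n}).
          Poly_Mapping.single (part f 0) 1 *
          (\<Prod>i\<in>{1..n}. tree_to_gl (act (ts ! (i - 1)) (part f i))))"

fun rb_nest :: "('a::ring_1 \<Rightarrow> 'a) \<Rightarrow> 'a list \<Rightarrow> 'a" where
  "rb_nest R [] = 1"
| "rb_nest R (x # xs) = foldl (\<lambda>w b. R w * b) x xs"

end

theory Submission
  imports Defs "HOL-Combinatorics.Multiset_Permutations"
begin


declare image_mset_cong[fundef_cong]

lemma msum_diff: "(\<Sum>x\<in>#M. (f x - g x :: 'b::ab_group_add)) = (\<Sum>x\<in>#M. f x) - (\<Sum>x\<in>#M. g x)"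
  by (induction M) (auto simp: algebra_simps)

lemma msum_cong: "(\<And>x. x \<in># M \<Longrightarrow> f x = g x) \<Longrightarrow> (\<Sum>x\<in>#M. f x) = (\<Sum>x\<in>#M. g x)"
  by (metis image_mset_cong)

lemma add_mset_diff_swap: "z \<in># N \<Longrightarrow> add_mset a N - {#z#} = add_mset a (N - {#z#})"
  by (metis add_mset_commute add_mset_remove_trivial insert_DiffM)

lemma msum_swap: "(\<Sum>x\<in>#M. \<Sum>z\<in>#M - {#x#}. g x z) = (\<Sum>z\<in>#M. \<Sum>x\<in>#M - {#z#}. (g x z :: 'b::comm_monoid_add))"
proof (induction M)
  case empty then show ?case by simp
next
  case (add a N)
  have 1: "(\<Sum>x\<in>#N. \<Sum>z\<in>#add_mset a N - {#x#}. g x z) = (\<Sum>x\<in>#N. g x a + (\<Sum>z\<in>#N - {#x#}. g x z))"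
    by (rule msum_cong) (simp add: add_mset_diff_swap)
  have 2: "(\<Sum>z\<in>#N. \<Sum>x\<in>#add_mset a N - {#z#}. g x z) = (\<Sum>z\<in>#N. g a z + (\<Sum>x\<in>#N - {#z#}. g x z))"
    by (rule msum_cong) (simp add: add_mset_diff_swap)
  show ?case using add 1 2 by (simp add: sum_mset.distrib algebra_simps)
qed

locale rbctx =
  fixes sc :: "'k::field \<Rightarrow> 'a::ring_1 \<Rightarrow> 'a" and \<theta> :: 'k and R :: "'a \<Rightarrow> 'a"
  assumes RB: "rota_baxter sc \<theta> R"
begin

lemma vs: "vector_space sc" using RB unfolding rota_baxter_def k_algebra_def by auto
lemma linR: "Vector_Spaces.linear sc sc R" using RB unfolding rota_baxter_def by auto
lemma scm1: "sc c (x * y) = sc c x * y" using RB unfolding rota_baxter_def k_algebra_def by auto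
lemma scm2: "sc c (x * y) = x * sc c y" using RB unfolding rota_baxter_def k_algebra_def by metis
lemma rbid: "R x * R y = R (R x * y + x * R y) + sc \<theta> (R (x * y))"
  using RB unfolding rota_baxter_def by auto

sublocale V: vector_space sc by (rule vs)
sublocale L: Vector_Spaces.linear sc sc R by (rule linR)

lemma R_msum: "R (\<Sum>x\<in>#M. f x) = (\<Sum>x\<in>#M. R (f x))"
  by (induction M) (auto simp: L.add)

lemma sc_msum: "sc c (\<Sum>x\<in>#M. f x) = (\<Sum>x\<in>#M. sc c (f x))"
  by (induction M) (auto simp: V.scale_right_distrib)

function Sm :: "'a multiset \<Rightarrow> 'a" where
  "Sm M = (if size M \<le> 1 then sum_mset M else (\<Sum>x\<in>#M. R (Sm (M - {#x#})) * x))"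
  by auto
termination by (relation "measure size") (auto simp: size_Diff1_less)

declare Sm.simps[simp del]

lemma Sm_empty[simp]: "Sm {#} = 0" by (simp add: Sm.simps)
lemma Sm_single[simp]: "Sm {#x#} = x" by (simp add: Sm.simps)
lemma Sm_rec: "2 \<le> size M \<Longrightarrow> Sm M = (\<Sum>x\<in>#M. R (Sm (M - {#x#})) * x)"
  by (subst Sm.simps) auto

lemma Sm_decomp: "N \<noteq> {#} \<Longrightarrow>
  Sm (add_mset a N) = R (Sm N) * a + (\<Sum>z\<in>#N. R (Sm (add_mset a (N - {#z#}))) * z)"
proof -
  assume "N \<noteq> {#}"
  then have "2 \<le> size (add_mset a N)" by (simp add: Suc_le_eq nonempty_has_size)
  then have "Sm (add_mset a N) = (\<Sum>x\<in>#add_mset a N. R (Sm (add_mset a N - {#x#})) * x)"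
    by (rule Sm_rec)
  also have "\<dots> = R (Sm N) * a + (\<Sum>z\<in>#N. R (Sm (add_mset a N - {#z#})) * z)" by simp
  also have "(\<Sum>z\<in>#N. R (Sm (add_mset a N - {#z#})) * z) = (\<Sum>z\<in>#N. R (Sm (add_mset a (N - {#z#}))) * z)"
    by (rule msum_cong) (simp add: add_mset_diff_swap)
  finally show ?thesis .
qed

lemma Sm_lin: "Sm (add_mset (a + b) N) = Sm (add_mset a N) + Sm (add_mset b N) \<and>
   Sm (add_mset (sc c a) N) = sc c (Sm (add_mset a N))"
proof (induction "size N" arbitrary: N a b c rule: less_induct)
  case less
  show ?case
  proof (cases "N = {#}")
    case True then show ?thesis by simp
  next
    case False
    have IH: "\<And>z a b c. z \<in># N \<Longrightarrow> Sm (add_mset (a + b) (N - {#z#})) = Sm (add_mset a (N - {#z#})) + Sm (add_mset b (N - {#z#})) \<and>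
   Sm (add_mset (sc c a) (N - {#z#})) = sc c (Sm (add_mset a (N - {#z#})))"
    proof -
      fix z a b c assume "z \<in># N"
      then have "size (N - {#z#}) < size N" by (rule size_Diff1_less)
      then show "?thesis z a b c" by (rule less)
    qed
    have "Sm (add_mset (a + b) N) = R (Sm N) * (a + b) + (\<Sum>z\<in>#N. R (Sm (add_mset (a+b) (N - {#z#}))) * z)"
      using False by (rule Sm_decomp)
    also have "(\<Sum>z\<in>#N. R (Sm (add_mset (a+b) (N - {#z#}))) * z) =
       (\<Sum>z\<in>#N. R (Sm (add_mset a (N - {#z#}))) * z + R (Sm (add_mset b (N - {#z#}))) * z)"
      by (rule msum_cong) (simp add: IH L.add algebra_simps)
    also have "R (Sm N) * (a + b) + (\<Sum>z\<in>#N. R (Sm (add_mset a (N - {#z#}))) * z + R (Sm (add_mset b (N - {#z#}))) * z)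
      = (R (Sm N) * a + (\<Sum>z\<in>#N. R (Sm (add_mset a (N - {#z#}))) * z)) + (R (Sm N) * b + (\<Sum>z\<in>#N. R (Sm (add_mset b (N - {#z#}))) * z))"
      by (simp only: sum_mset.distrib distrib_left add_ac)
    also have "\<dots> = Sm (add_mset a N) + Sm (add_mset b N)"
      by (simp only: Sm_decomp[OF False])
    finally have A: "Sm (add_mset (a + b) N) = Sm (add_mset a N) + Sm (add_mset b N)" .
    have "Sm (add_mset (sc c a) N) = R (Sm N) * sc c a + (\<Sum>z\<in>#N. R (Sm (add_mset (sc c a) (N - {#z#}))) * z)"
      using False by (rule Sm_decomp)
    also have "(\<Sum>z\<in>#N. R (Sm (add_mset (sc c a) (N - {#z#}))) * z) =
       (\<Sum>z\<in>#N. sc c (R (Sm (add_mset a (N - {#z#}))) * z))"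
      by (rule msum_cong) (simp add: IH L.scale scm1)
    also have "R (Sm N) * sc c a + (\<Sum>z\<in>#N. sc c (R (Sm (add_mset a (N - {#z#}))) * z))
       = sc c (R (Sm N) * a + (\<Sum>z\<in>#N. R (Sm (add_mset a (N - {#z#}))) * z))"
      by (simp only: sc_msum V.scale_right_distrib scm2)
    also have "\<dots> = sc c (Sm (add_mset a N))"
      by (simp only: Sm_decomp[OF False])
    finally have B: "Sm (add_mset (sc c a) N) = sc c (Sm (add_mset a N))" .
    show ?thesis using A B by blast
  qed
qed


lemma Sm_add: "Sm (add_mset (a + b) N) = Sm (add_mset a N) + Sm (add_mset b N)"
  using Sm_lin by blast
lemma Sm_scale: "Sm (add_mset (sc c a) N) = sc c (Sm (add_mset a N))"
  using Sm_lin by blast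
lemma Sm_zero: "Sm (add_mset 0 N) = 0"
  using Sm_scale[of 0 0 N] by simp
lemma Sm_diff: "Sm (add_mset (a - b) N) = Sm (add_mset a N) - Sm (add_mset b N)"
proof -
  have "a - b = a + sc (-1) b" by simp
  then show ?thesis by (simp only: Sm_add Sm_scale) simp
qed
lemma Sm_sum: "Sm (add_mset (\<Sum>s\<in>S. f s) N) = (\<Sum>s\<in>S. Sm (add_mset (f s) N))"
  by (induction S rule: infinite_finite_induct) (simp_all add: Sm_zero Sm_add)

lemma rb_r: "R (R a * y + a * R y + sc \<theta> (a * y)) = R a * R y"
  by (simp only: rbid L.add L.scale)

lemma Sm_key: "M \<noteq> {#} \<Longrightarrow> Sm (add_mset y M) = R (Sm M) * y + Sm M * R y + sc \<theta> (Sm M * y)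
   - (\<Sum>x\<in>#M. Sm (add_mset (rb_tri sc \<theta> R x y) (M - {#x#})))"
proof (induction "size M" arbitrary: M rule: less_induct)
  case less
  define T where "T x = rb_tri sc \<theta> R x y" for x
  define S where "S x = Sm (M - {#x#})" for x
  show ?case
  proof (cases "size M = 1")
    case True
    then obtain x where M: "M = {#x#}" using size_1_singleton_mset by blast
    have "Sm (add_mset y M) = R x * y + R y * x" using Sm_decomp[of "{#x#}" y] M by simp
    then show ?thesis using M by (simp add: rb_tri_def algebra_simps)
  next
    case False
    then have big: "2 \<le> size M" using less(2) by (cases "size M") auto
    have ne: "M - {#x#} \<noteq> {#}" for x using big
    proof -
      have "1 \<le> size (M - {#x#})" using big by (simp add: size_Diff_singleton_if, arith)
      then show ?thesis by auto
    qed
    have A: "(\<Sum>x\<in>#M. Sm (add_mset (T x) (M - {#x#}))) =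
      (\<Sum>x\<in>#M. R (S x) * T x + (\<Sum>z\<in>#M - {#x#}. R (Sm (add_mset (T x) (M - {#x#} - {#z#}))) * z))"
      by (rule msum_cong) (simp only: Sm_decomp[OF ne] S_def)
    have B: "(\<Sum>x\<in>#M. \<Sum>z\<in>#M - {#x#}. R (Sm (add_mset (T x) (M - {#x#} - {#z#}))) * z)
       = (\<Sum>z\<in>#M. \<Sum>x\<in>#M - {#z#}. R (Sm (add_mset (T x) (M - {#z#} - {#x#}))) * z)"
      apply (subst msum_swap)
      apply (intro msum_cong)
      apply (metis diff_right_commute)
      done
    have C: "(\<Sum>x\<in>#M - {#z#}. R (Sm (add_mset (T x) (M - {#z#} - {#x#}))) * z)
       = R (R (S z) * y + S z * R y + sc \<theta> (S z * y) - Sm (add_mset y (M - {#z#}))) * z"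
      if z: "z \<in># M" for z
    proof -
      have IH: "Sm (add_mset y (M - {#z#})) = R (S z) * y + S z * R y + sc \<theta> (S z * y)
         - (\<Sum>x\<in>#M - {#z#}. Sm (add_mset (T x) (M - {#z#} - {#x#})))"
        unfolding S_def T_def using less(1)[OF size_Diff1_less[OF z] ne] .
      have "(\<Sum>x\<in>#M - {#z#}. R (Sm (add_mset (T x) (M - {#z#} - {#x#}))) * z)
          = R (\<Sum>x\<in>#M - {#z#}. Sm (add_mset (T x) (M - {#z#} - {#x#}))) * z"
        by (simp only: R_msum sum_mset_distrib_right)
      also have "(\<Sum>x\<in>#M - {#z#}. Sm (add_mset (T x) (M - {#z#} - {#x#})))
         = R (S z) * y + S z * R y + sc \<theta> (S z * y) - Sm (add_mset y (M - {#z#}))"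
        using IH by (simp add: algebra_simps)
      finally show ?thesis .
    qed
    have D: "R (S x) * T x + R (R (S x) * y + S x * R y + sc \<theta> (S x * y) - Sm (add_mset y (M - {#x#}))) * x
       = R (S x) * x * R y + sc \<theta> (R (S x) * x * y) - R (Sm (add_mset y (M - {#x#}))) * x" for x
    proof -
      have "R (S x) * sc \<theta> (x * y) = sc \<theta> (R (S x) * x * y)"
        by (simp only: scm2[symmetric] mult.assoc)
      moreover have "R (R (S x) * y + S x * R y + sc \<theta> (S x * y) - Sm (add_mset y (M - {#x#})))
        = R (S x) * R y - R (Sm (add_mset y (M - {#x#})))" by (simp only: L.diff rb_r)
      moreover have "R (S x) * T x = R (S x) * x * R y - R (S x) * R y * x + R (S x) * sc \<theta> (x * y)"
        by (simp add: T_def rb_tri_def distrib_left right_diff_distrib mult.assoc)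
      ultimately show ?thesis
        by (simp only:) (simp add: algebra_simps)
    qed
    have "(\<Sum>x\<in>#M. Sm (add_mset (T x) (M - {#x#}))) =
      (\<Sum>x\<in>#M. R (S x) * T x) + (\<Sum>z\<in>#M. R (R (S z) * y + S z * R y + sc \<theta> (S z * y) - Sm (add_mset y (M - {#z#}))) * z)"
      unfolding A sum_mset.distrib B using C by (metis (mono_tags, lifting) msum_cong)
    also have "\<dots> = (\<Sum>x\<in>#M. R (S x) * x * R y + sc \<theta> (R (S x) * x * y) - R (Sm (add_mset y (M - {#x#}))) * x)"
      by (simp only: sum_mset.distrib[symmetric] D)
    also have "\<dots> = Sm M * R y + sc \<theta> (Sm M * y) - (Sm (add_mset y M) - R (Sm M) * y)"
    proof -
      have e1: "Sm M * R y = (\<Sum>x\<in>#M. R (S x) * x * R y)"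
        by (simp only: Sm_rec[OF big] S_def sum_mset_distrib_right)
      have e2: "sc \<theta> (Sm M * y) = (\<Sum>x\<in>#M. sc \<theta> (R (S x) * x * y))"
        by (simp only: Sm_rec[OF big] S_def sum_mset_distrib_right sc_msum)
      have e3: "Sm (add_mset y M) - R (Sm M) * y = (\<Sum>x\<in>#M. R (Sm (add_mset y (M - {#x#}))) * x)"
        by (simp only: Sm_decomp[OF less(2)]) simp
      show ?thesis by (simp only: msum_diff sum_mset.distrib e1 e2 e3)
    qed
    finally have fin: "(\<Sum>x\<in>#M. Sm (add_mset (T x) (M - {#x#}))) = Sm M * R y + sc \<theta> (Sm M * y) - (Sm (add_mset y M) - R (Sm M) * y)" .
    have gen: "\<And>X A B C D :: 'a. X = A + B - (C - D) \<Longrightarrow> C = D + A + B - X" by (simp add: algebra_simps)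
    show ?thesis using gen[OF fin] unfolding T_def .
  qed
qed

lemma nest_single[simp]: "rb_nest R [x] = x" by simp
lemma nest_snoc: "ws \<noteq> [] \<Longrightarrow> rb_nest R (ws @ [b]) = R (rb_nest R ws) * b"
  by (cases ws) auto

definition Qr :: "'b set \<Rightarrow> ('b \<Rightarrow> 'a) \<Rightarrow> 'a" where
  "Qr A f = (\<Sum>ps\<in>permutations_of_set A. rb_nest R (map f (rev ps)))"

lemma Qr_split: assumes "finite A" "A \<noteq> {}"
  shows "Qr A f = (\<Sum>a\<in>A. \<Sum>ps\<in>permutations_of_set (A - {a}). rb_nest R (map f (rev ps) @ [f a]))"
proof -
  have "Qr A f = (\<Sum>ps\<in>(\<Union>a\<in>A. (\<lambda>xs. a # xs) ` permutations_of_set (A - {a})). rb_nest R (map f (rev ps)))"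
    unfolding Qr_def using permutations_of_set_nonempty[OF assms(2)] by simp
  also have "\<dots> = (\<Sum>a\<in>A. \<Sum>ps\<in>(\<lambda>xs. a # xs) ` permutations_of_set (A - {a}). rb_nest R (map f (rev ps)))"
    by (rule sum.UNION_disjoint) (use assms(1) in auto)
  also have "\<dots> = (\<Sum>a\<in>A. \<Sum>ps\<in>permutations_of_set (A - {a}). rb_nest R (map f (rev ps) @ [f a]))"
    by (rule sum.cong[OF refl], subst sum.reindex) (auto simp: inj_on_def)
  finally show ?thesis .
qed

lemma Qr_Sm: "finite A \<Longrightarrow> A \<noteq> {} \<Longrightarrow> Qr A f = Sm (image_mset f (mset_set A))"
proof (induction "card A" arbitrary: A rule: less_induct)
  case less
  show ?case
  proof (cases "card A = 1")
    case True
    then obtain a where A: "A = {a}" using card_1_singletonE by blast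
    show ?thesis unfolding A Qr_def by simp
  next
    case False
    then have big: "2 \<le> card A" using less(2,3) by (cases "card A") (auto simp: card_eq_0_iff)
    have ne: "A - {a} \<noteq> {}" for a
    proof -
      have "1 \<le> card (A - {a})" using big by (simp add: card_Diff_singleton_if, arith)
      then show ?thesis by (metis card.empty not_one_le_zero)
    qed
    have "Qr A f = (\<Sum>a\<in>A. \<Sum>ps\<in>permutations_of_set (A - {a}). R (rb_nest R (map f (rev ps))) * f a)"
      unfolding Qr_split[OF less(2,3)]
    proof (intro sum.cong refl)
      fix a ps assume "ps \<in> permutations_of_set (A - {a})"
      then have "set ps = A - {a}" by (rule permutations_of_setD(1))
      then have "ps \<noteq> []" using ne[of a] by (metis set_empty)
      then show "rb_nest R (map f (rev ps) @ [f a]) = R (rb_nest R (map f (rev ps))) * f a"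
        by (simp add: nest_snoc)
    qed
    also have "\<dots> = (\<Sum>a\<in>A. R (Qr (A - {a}) f) * f a)"
      unfolding Qr_def by (simp add: L.sum sum_distrib_right)
    also have "\<dots> = (\<Sum>a\<in>A. R (Sm (image_mset f (mset_set (A - {a})))) * f a)"
    proof (intro sum.cong refl)
      fix a assume a: "a \<in> A"
      have "card (A - {a}) < card A" using less(2) a by (rule card_Diff1_less)
      then show "R (Qr (A - {a}) f) * f a = R (Sm (image_mset f (mset_set (A - {a})))) * f a"
        using less(1)[of "A - {a}"] less(2) ne[of a] by simp
    qed
    also have "\<dots> = Sm (image_mset f (mset_set A))"
    proof -
      have sz: "2 \<le> size (image_mset f (mset_set A))" using big by simp
      have "Sm (image_mset f (mset_set A)) = (\<Sum>a\<in>#mset_set A. R (Sm (image_mset f (mset_set A) - {#f a#})) * f a)"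
        by (simp add: Sm_rec[OF sz] multiset.map_comp comp_def)
      also have "\<dots> = (\<Sum>a\<in>#mset_set A. R (Sm (image_mset f (mset_set (A - {a})))) * f a)"
      proof (rule msum_cong)
        fix a assume a: "a \<in># mset_set A"
        then have aA: "a \<in> A" using less(2) by simp
        have "mset_set (A - {a}) = mset_set A - {#a#}" using mset_set_Diff[OF less(2), of "{a}"] aA by simp
        moreover have "{#a#} \<subseteq># mset_set A" using a by simp
        ultimately show "R (Sm (image_mset f (mset_set A) - {#f a#})) * f a = R (Sm (image_mset f (mset_set (A - {a})))) * f a"
          by (simp add: image_mset_Diff)
      qed
      finally show ?thesis by (simp add: sum_unfold_sum_mset)
    qed
    finally show ?thesis .
  qed
qed

lemma perm_sum: "xs \<noteq> [] \<Longrightarrow> (\<Sum>\<sigma>\<in>{\<sigma>. \<sigma> permutes {..<length xs}}. rb_nest R (map (\<lambda>i. xs ! \<sigma> i) [0..<length xs]))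
   = Sm (mset xs)"
proof -
  assume xs: "xs \<noteq> []"
  define n where "n = length xs"
  define g where "g \<sigma> = map \<sigma> [0..<n]" for \<sigma> :: "nat \<Rightarrow> nat"
  have inj: "inj_on g {\<sigma>. \<sigma> permutes {..<n}}"
  proof (rule inj_onI)
    fix \<sigma> \<tau> assume s: "\<sigma> \<in> {\<sigma>. \<sigma> permutes {..<n}}" and t: "\<tau> \<in> {\<sigma>. \<sigma> permutes {..<n}}" and e: "g \<sigma> = g \<tau>"
    show "\<sigma> = \<tau>"
    proof
      fix i show "\<sigma> i = \<tau> i"
      proof (cases "i < n")
        case True then show ?thesis using e unfolding g_def by (metis map_eq_conv atLeastLessThan_iff set_upt zero_le)
      next
        case False then show ?thesis using s t by (simp add: permutes_not_in)
      qed
    qed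
  qed
  have img: "g ` {\<sigma>. \<sigma> permutes {..<n}} = permutations_of_set {..<n}"
  proof
    show "g ` {\<sigma>. \<sigma> permutes {..<n}} \<subseteq> permutations_of_set {..<n}"
    proof clarify
      fix \<sigma> assume s: "\<sigma> permutes {..<n}"
      have "set (g \<sigma>) = {..<n}" unfolding g_def using permutes_image[OF s] by (simp add: atLeast0LessThan)
      moreover have "distinct (g \<sigma>)" unfolding g_def
        using permutes_inj_on[OF s] by (simp add: distinct_map atLeast0LessThan inj_on_subset)
      ultimately show "g \<sigma> \<in> permutations_of_set {..<n}" by (simp add: permutations_of_set_def)
    qed
  next
    show "permutations_of_set {..<n} \<subseteq> g ` {\<sigma>. \<sigma> permutes {..<n}}"
    proof
      fix ps assume ps: "ps \<in> permutations_of_set {..<n}"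
      have len: "length ps = n" using length_finite_permutations_of_set[OF ps] by simp
      have sp: "set ps = {..<n}" and dp: "distinct ps" using ps by (auto simp: permutations_of_set_def)
      define \<sigma> where "\<sigma> i = (if i < n then ps ! i else i)" for i
      have "bij_betw \<sigma> {..<n} {..<n}"
      proof (rule bij_betw_imageI)
        show "inj_on \<sigma> {..<n}" unfolding \<sigma>_def inj_on_def using dp len by (simp add: nth_eq_iff_index_eq)
        show "\<sigma> ` {..<n} = {..<n}" unfolding \<sigma>_def using sp len by (auto simp: set_conv_nth)
      qed
      then have "\<sigma> permutes {..<n}" by (rule bij_imp_permutes) (simp add: \<sigma>_def)
      moreover have "g \<sigma> = ps" unfolding g_def \<sigma>_def using len by (intro nth_equalityI) auto
      ultimately show "ps \<in> g ` {\<sigma>. \<sigma> permutes {..<n}}" by blast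
    qed
  qed
  have "(\<Sum>\<sigma>\<in>{\<sigma>. \<sigma> permutes {..<n}}. rb_nest R (map (\<lambda>i. xs ! \<sigma> i) [0..<n]))
     = (\<Sum>\<sigma>\<in>{\<sigma>. \<sigma> permutes {..<n}}. rb_nest R (map (nth xs) (g \<sigma>)))"
    unfolding g_def by (simp add: comp_def)
  also have "\<dots> = (\<Sum>ps\<in>permutations_of_set {..<n}. rb_nest R (map (nth xs) ps))"
    using sum.reindex[OF inj, of "\<lambda>ps. rb_nest R (map (nth xs) ps)"] img by simp
  also have "\<dots> = (\<Sum>ps\<in>permutations_of_set {..<n}. rb_nest R (map (nth xs) (rev ps)))"
  proof -
    have "(\<Sum>ps\<in>permutations_of_set {..<n}. rb_nest R (map (nth xs) (rev ps)))
      = (\<Sum>ps\<in>rev ` permutations_of_set {..<n}. rb_nest R (map (nth xs) ps))"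
      by (subst sum.reindex) (auto simp: inj_on_def)
    then show ?thesis by simp
  qed
  also have "\<dots> = Sm (image_mset (nth xs) (mset_set {..<n}))"
    using Qr_Sm[of "{..<n}" "nth xs"] xs unfolding Qr_def n_def by (simp add: lessThan_empty_iff)
  also have "image_mset (nth xs) (mset_set {..<n}) = mset xs"
  proof -
    have "mset xs = mset (map (nth xs) [0..<n])" unfolding n_def by (simp add: map_nth)
    then show ?thesis by (simp add: atLeast0LessThan)
  qed
  finally show ?thesis unfolding n_def .
qed
end


lemma forest_list_mset[simp]: "mset (forest_list F) = F"
  unfolding forest_list_def by (rule someI_ex) (rule ex_mset)

lemma forest_list_single: "forest_list {#u#} = [u]"
  using forest_list_mset[of "{#u#}"] by (metis mset_single_iff)

lemma forest_list_empty: "forest_list {#} = []"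
  using forest_list_mset[of "{#}"] by (metis mset_zero_iff)

lemma lookup_scale: "Poly_Mapping.lookup (scale c p) x = c * Poly_Mapping.lookup p x"
  unfolding scale_def by (simp add: Poly_Mapping.map.rep_eq when_def)

lemma scale_single[simp]: "scale c (Poly_Mapping.single x d) = Poly_Mapping.single x (c * d)"
  unfolding scale_def by simp

lemma scale_one[simp]: "scale 1 p = p"
  by (rule poly_mapping_eqI) (simp add: lookup_scale)

lemma lin_single1: "lin f (Poly_Mapping.single x 1) = f x"
  unfolding lin_def by simp

lemma act_empty: "act t {#} = Poly_Mapping.single t 1"
  unfolding act_def by (simp add: forest_list_empty)

lemma act_single: "act t {#u#} = graft t u"
  unfolding act_def by (simp add: forest_list_single lin_single1)

lemma tree_to_gl_single: "tree_to_gl (Poly_Mapping.single t 1) = Poly_Mapping.single {#t#} 1"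
  unfolding tree_to_gl_def by (simp add: lin_single1)

lemma tree_to_gl_times: "tree_to_gl (G :: 'd rtree \<Rightarrow>\<^sub>0 'k::comm_ring_1) * Poly_Mapping.single F 1
   = (\<Sum>s\<in>Poly_Mapping.keys G. Poly_Mapping.single (add_mset s F) (Poly_Mapping.lookup G s))"
  unfolding tree_to_gl_def lin_def by (simp add: sum_distrib_right mult_single)

lemma prod_single: "(\<Prod>l\<in>L. Poly_Mapping.single (a l) (1::'k::comm_semiring_1)) = Poly_Mapping.single (\<Sum>l\<in>L. a l) 1"
  by (induction L rule: infinite_finite_induct) (simp_all add: mult_single)

lemma msum_nth: "(\<Sum>l<length ts. {#ts ! l#}) = mset ts"
  by (induction ts rule: rev_induct) (simp_all add: nth_append)

lemma gl_prod_single: "gl_prod F {#u#} =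
   Poly_Mapping.single (add_mset u F) (1::'k::comm_ring_1) +
   (\<Sum>i<length (forest_list F). tree_to_gl (graft (forest_list F ! i) u) * Poly_Mapping.single (F - {#forest_list F ! i#}) 1)"
proof -
  define ts where "ts = forest_list F"
  define n where "n = length ts"
  have F: "F = mset ts" unfolding ts_def by simp
  define h where "h i = (\<lambda>x\<in>{0::nat}. i)" for i :: nat
  have pie: "Pi\<^sub>E {..<length [u]} (\<lambda>_. {..n}) = h ` {..n}"
  proof -
    have 1: "{..<length [u]} = {0}" by auto
    have "Pi\<^sub>E {0} (\<lambda>_. {..n}) = (\<Union>b\<in>{..n}. {\<lambda>x\<in>{0::nat}. b})" by (rule PiE_over_singleton_iff)
    also have "\<dots> = h ` {..n}" unfolding h_def by blast
    finally show ?thesis unfolding 1 .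
  qed
  have injh: "inj_on h {..n}"
  proof (rule inj_onI)
    fix a b assume "h a = h b"
    then have "h a 0 = h b 0" by simp
    then show "a = b" by (simp add: h_def)
  qed
  have m1: "mset_set {..<length [u]} = {#0::nat#}"
    by (metis One_nat_def lessThan_Suc lessThan_0 insert_def Un_empty_right length_Cons list.size(3) mset_set.empty mset_set.insert empty_iff finite.emptyI add_mset_add_single empty_neutral(1) insert_is_Un)
  have part: "image_mset (\<lambda>j. [u] ! j) (filter_mset (\<lambda>j. h i j = l) (mset_set {..<length [u]})) = (if i = l then {#u#} else {#})" for i l
    by (simp only: m1) (simp add: h_def)
  define g where "g i = Poly_Mapping.single (if i = 0 then {#u#} else {#}) (1::'k) *
      (\<Prod>l\<in>{1..n}. tree_to_gl (act (ts ! (l - 1)) (if i = l then {#u#} else {#})))" for i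
  have "gl_prod F {#u#} = (\<Sum>f\<in>h ` {..n}. Poly_Mapping.single (image_mset (\<lambda>j. [u] ! j) (filter_mset (\<lambda>j. f j = 0) (mset_set {..<length [u]}))) 1 *
          (\<Prod>i\<in>{1..n}. tree_to_gl (act (ts ! (i - 1)) (image_mset (\<lambda>j. [u] ! j) (filter_mset (\<lambda>j. f j = i) (mset_set {..<length [u]}))))))"
    unfolding gl_prod_def Let_def forest_list_single ts_def[symmetric] n_def[symmetric] pie ..
  also have "\<dots> = (\<Sum>i\<in>{..n}. g i)"
    by (subst sum.reindex[OF injh]) (simp only: part o_def, simp add: g_def)
  also have "\<dots> = g 0 + (\<Sum>i<n. g (Suc i))"
    by (rule sum.atMost_shift)
  finally have e: "gl_prod F {#u#} = g 0 + (\<Sum>i<n. g (Suc i))" .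
  have g0: "g 0 = Poly_Mapping.single (add_mset u F) 1"
  proof -
    have "g 0 = Poly_Mapping.single {#u#} 1 * (\<Prod>l\<in>{1..n}. Poly_Mapping.single {#ts ! (l - 1)#} 1)"
      unfolding g_def by (simp add: act_empty tree_to_gl_single)
    also have "(\<Sum>l\<in>{1..n}. {#ts ! (l - 1)#}) = (\<Sum>l<n. {#ts ! l#})"
      by (rule sum.reindex_bij_witness[of _ Suc "\<lambda>l. l - 1"]) auto
    ultimately show ?thesis by (simp add: prod_single mult_single msum_nth F n_def)
  qed
  have gS: "g (Suc i) = tree_to_gl (graft (ts ! i) u) * Poly_Mapping.single (F - {#ts ! i#}) 1" if i: "i < n" for i
  proof -
    have split: "{1..n} = insert (Suc i) ({1..n} - {Suc i})" using i by auto
    have "g (Suc i) = tree_to_gl (graft (ts ! i) u) * (\<Prod>l\<in>{1..n} - {Suc i}. Poly_Mapping.single {#ts ! (l - 1)#} 1)"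
      unfolding g_def by (subst split, subst prod.insert) (auto simp: act_empty act_single tree_to_gl_single intro!: prod.cong)
    also have "(\<Sum>l\<in>{1..n} - {Suc i}. {#ts ! (l - 1)#}) = F - {#ts ! i#}"
    proof -
      have "(\<Sum>l\<in>{1..n}. {#ts ! (l - 1)#}) = {#ts ! i#} + (\<Sum>l\<in>{1..n} - {Suc i}. {#ts ! (l - 1)#})"
        by (subst split, subst sum.insert) auto
      moreover have "(\<Sum>l\<in>{1..n}. {#ts ! (l - 1)#}) = (\<Sum>l<n. {#ts ! l#})"
        by (rule sum.reindex_bij_witness[of _ Suc "\<lambda>l. l - 1"]) auto
      ultimately show ?thesis by (simp add: msum_nth F n_def) (metis add_mset_remove_trivial)
    qed
    ultimately show ?thesis by (simp add: prod_single)
  qed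
  show ?thesis unfolding e g0 ts_def[symmetric] n_def[symmetric] using gS by simp
qed



context rbctx begin

lemma le_super: "finite S \<Longrightarrow> Poly_Mapping.keys p \<subseteq> S \<Longrightarrow>
   lin_ext sc j p = (\<Sum>x\<in>S. sc (Poly_Mapping.lookup p x) (j x))"
  unfolding lin_ext_def
  by (rule sum.mono_neutral_left) (auto simp: in_keys_iff)

lemma le_add: "lin_ext sc j (p + q) = lin_ext sc j p + lin_ext sc j q"
proof -
  let ?S = "Poly_Mapping.keys p \<union> Poly_Mapping.keys q"
  have f: "finite ?S" by simp
  have "lin_ext sc j (p + q) = (\<Sum>x\<in>?S. sc (Poly_Mapping.lookup (p + q) x) (j x))"
    by (rule le_super[OF f keys_add])
  also have "\<dots> = (\<Sum>x\<in>?S. sc (Poly_Mapping.lookup p x) (j x)) + (\<Sum>x\<in>?S. sc (Poly_Mapping.lookup q x) (j x))"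
    by (simp add: lookup_add V.scale_left_distrib sum.distrib)
  also have "\<dots> = lin_ext sc j p + lin_ext sc j q"
    by (simp add: le_super[OF f])
  finally show ?thesis .
qed

lemma le_zero: "lin_ext sc j 0 = 0"
  unfolding lin_ext_def by simp

lemma le_single: "lin_ext sc j (Poly_Mapping.single x c) = sc c (j x)"
  unfolding lin_ext_def by (simp add: lookup_single)

lemma le_sum: "lin_ext sc j (\<Sum>i\<in>I. p i) = (\<Sum>i\<in>I. lin_ext sc j (p i))"
  by (induction I rule: infinite_finite_induct) (simp_all add: le_zero le_add)

lemma le_ttg_times: "lin_ext sc j (tree_to_gl G * Poly_Mapping.single F 1) =
   (\<Sum>s\<in>Poly_Mapping.keys G. sc (Poly_Mapping.lookup G s) (j (add_mset s F)))"
  by (simp add: tree_to_gl_times le_sum le_single)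

lemma le_ttg: "lin_ext sc j (tree_to_gl G) =
   (\<Sum>s\<in>Poly_Mapping.keys G. sc (Poly_Mapping.lookup G s) (j {#s#}))"
  unfolding tree_to_gl_def lin_def by (simp add: le_sum le_single)

end

locale glctx = rbctx sc \<theta> R for sc :: "'k::field \<Rightarrow> 'a::ring_1 \<Rightarrow> 'a" and \<theta> R +
  fixes j :: "'d forest \<Rightarrow> 'a"
  assumes graft_hom: "\<And>t t'. lin_ext sc j (tree_to_gl (graft t t'))
                     = rb_tri sc \<theta> R (j {#t#}) (j {#t'#})"
    and prod_hom: "\<And>F G. F \<noteq> {#} \<Longrightarrow> G \<noteq> {#} \<Longrightarrow>
                     lin_ext sc j (gl_prod F G) = rb_star sc \<theta> R (j F) (j G)"
begin

definition J where "J t = j {#t#}"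

lemma main: "F \<noteq> {#} \<Longrightarrow> j F = Sm (image_mset J F)"
proof (induction "size F" arbitrary: F rule: less_induct)
  case less
  obtain u G where F: "F = add_mset u G" using less(2) by (metis multiset_cases)
  show ?case
  proof (cases "G = {#}")
    case True then show ?thesis unfolding F J_def by simp
  next
    case False
    define ts where "ts = forest_list G"
    define n where "n = length ts"
    have G: "G = mset ts" unfolding ts_def by simp
    have IH: "j (add_mset s (G - {#ts ! i#})) = Sm (add_mset (J s) (image_mset J (G - {#ts ! i#})))"
      if i: "i < n" for i s
    proof -
      have "ts ! i \<in># G" using i unfolding G n_def by simp
      then have "size (add_mset s (G - {#ts ! i#})) < size F" unfolding F by (simp add: size_Diff1_less)
      then show ?thesis using less(1)[of "add_mset s (G - {#ts ! i#})"] by simp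
    qed
    have trm: "lin_ext sc j (tree_to_gl (graft (ts ! i) u) * Poly_Mapping.single (G - {#ts ! i#}) 1)
       = Sm (add_mset (rb_tri sc \<theta> R (J (ts ! i)) (J u)) (image_mset J (G - {#ts ! i#})))" if i: "i < n" for i
    proof -
      let ?g = "graft (ts ! i) u :: 'd rtree \<Rightarrow>\<^sub>0 'k"
      have "lin_ext sc j (tree_to_gl ?g * Poly_Mapping.single (G - {#ts ! i#}) 1)
         = (\<Sum>s\<in>Poly_Mapping.keys ?g. sc (Poly_Mapping.lookup ?g s) (Sm (add_mset (J s) (image_mset J (G - {#ts ! i#})))))"
        by (simp add: le_ttg_times IH[OF i])
      also have "\<dots> = Sm (add_mset (\<Sum>s\<in>Poly_Mapping.keys ?g. sc (Poly_Mapping.lookup ?g s) (J s)) (image_mset J (G - {#ts ! i#})))"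
        by (simp add: Sm_sum Sm_scale)
      also have "(\<Sum>s\<in>Poly_Mapping.keys ?g. sc (Poly_Mapping.lookup ?g s) (J s)) = rb_tri sc \<theta> R (J (ts ! i)) (J u)"
        using graft_hom[of "ts ! i" u] by (simp add: le_ttg J_def)
      finally show ?thesis .
    qed
    have "rb_star sc \<theta> R (j G) (j {#u#}) = lin_ext sc j (gl_prod G {#u#})"
      using prod_hom[OF False] by simp
    also have "\<dots> = j F + (\<Sum>i<n. Sm (add_mset (rb_tri sc \<theta> R (J (ts ! i)) (J u)) (image_mset J (G - {#ts ! i#}))))"
      unfolding gl_prod_single ts_def[symmetric] n_def[symmetric] le_add le_sum le_single F
      by (simp add: trm)
    also have "(\<Sum>i<n. Sm (add_mset (rb_tri sc \<theta> R (J (ts ! i)) (J u)) (image_mset J (G - {#ts ! i#}))))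
      = (\<Sum>x\<in>#G. Sm (add_mset (rb_tri sc \<theta> R (J x) (J u)) (image_mset J (G - {#x#}))))"
    proof -
      have "(\<Sum>i<n. (\<lambda>x. Sm (add_mset (rb_tri sc \<theta> R (J x) (J u)) (image_mset J (G - {#x#})))) (ts ! i))
         = sum_list (map (\<lambda>x. Sm (add_mset (rb_tri sc \<theta> R (J x) (J u)) (image_mset J (G - {#x#})))) ts)"
        unfolding n_def by (simp add: sum_list_sum_nth atLeast0LessThan)
      also have "\<dots> = (\<Sum>x\<in>#G. Sm (add_mset (rb_tri sc \<theta> R (J x) (J u)) (image_mset J (G - {#x#}))))"
        unfolding G by (simp flip: sum_mset_sum_list)
      finally show ?thesis by simp
    qed
    also have "\<dots> = (\<Sum>a\<in>#image_mset J G. Sm (add_mset (rb_tri sc \<theta> R a (J u)) (image_mset J G - {#a#})))"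
    proof -
      have "(\<Sum>x\<in>#G. Sm (add_mset (rb_tri sc \<theta> R (J x) (J u)) (image_mset J (G - {#x#}))))
         = (\<Sum>x\<in>#G. Sm (add_mset (rb_tri sc \<theta> R (J x) (J u)) (image_mset J G - {#J x#})))"
        by (rule msum_cong) (simp add: image_mset_Diff)
      then show ?thesis by (simp add: multiset.map_comp comp_def)
    qed
    finally have eq: "rb_star sc \<theta> R (j G) (j {#u#}) = j F +
       (\<Sum>a\<in>#image_mset J G. Sm (add_mset (rb_tri sc \<theta> R a (J u)) (image_mset J G - {#a#})))" .
    have jG: "j G = Sm (image_mset J G)" using less(1)[OF _ False] unfolding F by simp
    have ne: "image_mset J G \<noteq> {#}" using False by simp
    have "Sm (image_mset J F) = Sm (add_mset (J u) (image_mset J G))" unfolding F by simp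
    also have "\<dots> = rb_star sc \<theta> R (j G) (j {#u#}) -
       (\<Sum>a\<in>#image_mset J G. Sm (add_mset (rb_tri sc \<theta> R a (J u)) (image_mset J G - {#a#})))"
      unfolding Sm_key[OF ne] rb_star_def jG J_def[symmetric] by simp
    also have "\<dots> = j F" using eq by simp
    finally show ?thesis by simp
  qed
qed

end

theorem theorem3p5:
  fixes sc :: "'k::field_char_0 \<Rightarrow> 'a::ring_1 \<Rightarrow> 'a"
    and \<theta> :: 'k
    and R :: "'a \<Rightarrow> 'a"
    and \<phi> :: "'d \<Rightarrow> 'a"
    and j :: "'d forest \<Rightarrow> 'a"
    and bs :: "'d list"
  assumes RB: "rota_baxter sc \<theta> R"
    and unit: "j {#} = 1"
    and gen: "\<And>d. j {#leaf d#} = \<phi> d"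
    and graft_hom: "\<And>t t'. lin_ext sc j (tree_to_gl (graft t t'))
                     = rb_tri sc \<theta> R (j {#t#}) (j {#t'#})"
    and prod_hom: "\<And>F G. F \<noteq> {#} \<Longrightarrow> G \<noteq> {#} \<Longrightarrow>
                     lin_ext sc j (gl_prod F G) = rb_star sc \<theta> R (j F) (j G)"
    and nonempty: "bs \<noteq> []"
  shows "lin_ext sc j (Poly_Mapping.single (mset (map leaf bs)) (1::'k)) =
         (\<Sum>\<sigma>\<in>{\<sigma>. \<sigma> permutes {..<length bs}}.
            rb_nest R (map (\<lambda>i. \<phi> (bs ! \<sigma> i)) [0..<length bs]))"
  proof -
  interpret G: glctx sc \<theta> R j
    by (simp add: glctx_def glctx_axioms_def rbctx_def RB graft_hom prod_hom)
  define F where "F = mset (map leaf bs)"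
  have Fne: "F \<noteq> {#}" unfolding F_def using nonempty by simp
  have "lin_ext sc j (Poly_Mapping.single F (1::'k)) = j F" by (simp add: G.le_single)
  also have "\<dots> = G.Sm (image_mset G.J F)" by (rule G.main[OF Fne])
  also have "image_mset G.J F = mset (map \<phi> bs)"
    unfolding F_def by (simp add: multiset.map_comp comp_def G.J_def gen)
  also have "G.Sm (mset (map \<phi> bs)) = (\<Sum>\<sigma>\<in>{\<sigma>. \<sigma> permutes {..<length (map \<phi> bs)}}.
       rb_nest R (map (\<lambda>i. map \<phi> bs ! \<sigma> i) [0..<length (map \<phi> bs)]))"
    using G.perm_sum[of "map \<phi> bs"] nonempty by simp
  also have "\<dots> = (\<Sum>\<sigma>\<in>{\<sigma>. \<sigma> permutes {..<length bs}}.
            rb_nest R (map (\<lambda>i. \<phi> (bs ! \<sigma> i)) [0..<length bs]))"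
  proof (rule sum.cong)
    fix \<sigma> assume "\<sigma> \<in> {\<sigma>. \<sigma> permutes {..<length bs}}"
    then have s: "\<sigma> permutes {..<length bs}" by simp
    have "map (\<lambda>i. map \<phi> bs ! \<sigma> i) [0..<length bs] = map (\<lambda>i. \<phi> (bs ! \<sigma> i)) [0..<length bs]"
    proof (rule map_cong[OF refl])
      fix i assume "i \<in> set [0..<length bs]"
      then have "\<sigma> i < length bs" using permutes_in_image[OF s, of i] by simp
      then show "map \<phi> bs ! \<sigma> i = \<phi> (bs ! \<sigma> i)" by simp
    qed
    then show "rb_nest R (map (\<lambda>i. map \<phi> bs ! \<sigma> i) [0..<length (map \<phi> bs)]) =
          rb_nest R (map (\<lambda>i. \<phi> (bs ! \<sigma> i)) [0..<length bs])" by (simp only: length_map)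
  qed simp
  finally show ?thesis unfolding F_def .
qed

end
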